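(* Let $n\ge 3$, let $\boldsymbol\ell=(\ell_1,\ldots,\ell_n)$ be a vector of positive numbers, and let $\mu,\tau_0\in\mathbb{R}$ be constants. Let $V_{\boldsymbol\ell}=\ell_1\cdots\ell_n$ be the volume of $(T^n,g_{\boldsymbol\ell})$. Consider the CMC conformal data set $(g_{\boldsymbol\ell},\ \mu\,\sigma^\flat_{\boldsymbol\ell},\ \tau_0)$ on $T^n$. \begin{enumerate} \item If $\tau_0$ and $\mu$ are nonzero and have the same sign, then the data set generates a CMC slice of a flat Kasner spacetime; the induced metric on the slice has volume $|\mu/\tau_0|\,V_{\boldsymbol\ell}$, and the Kasner spacetime is expanding if $\tau_0>0$ and contracting if $\tau_0<0$. \item If $\tau_0$ and $\mu$ are nonzero and have opposite signs, then the data set generates a CMC slice of a dual-to-flat Kasner spacetime; the induced metric on the slice has volume $|\mu/\tau_0|\,V_{\boldsymbol\ell}$, and the Kasner spacetime is expanding if $\tau_0>0$ and contracting if $\tau_0<0$. \item If $\tau_0=0$ and $\mu=0$, then the data set generates a homothety family (a one-parameter family related by constant rescalings) of CMC slices of static toroidal spacetimes. \item If exactly one of $\tau_0$, $\mu$ vanishes, then the data set generates no solution of the Einstein constraint equations. \end{enumerate}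
   Context: Let $q=\frac{2n}{n-2}$ and $\kappa=\frac{n-1}{n}$. Let $S^1=\mathbb{R}/\mathbb{Z}$ with unit coordinate $s$ (so $\int_{S^1}ds=1$), and $T^n=(S^1)^n$ with unit coordinates $(s^1,\ldots,s^n)$. For positive lengths $\boldsymbol\ell$, $g_{\boldsymbol\ell}=\sum_{k=1}^n\ell_k^2(ds^k)^2$ (a flat metric). Define $\sigma^\flat_{\boldsymbol\ell}=\kappa\,\ell_1^2(ds^1)^2-\frac1n\sum_{k=2}^n\ell_k^2(ds^k)^2$, which is transverse-traceless (divergence-free and trace-free) with respect to $g_{\boldsymbol\ell}$. Einstein constraint equations for $(\bar g,\bar K)$ on $T^n$: $R_{\bar g}-|\bar K|^2_{\bar g}+(\mathrm{tr}_{\bar g}\bar K)^2=0$ and $\mathrm{div}_{\bar g}\bar K=d(\mathrm{tr}_{\bar g}\bar K)$. CMC conformal method: a data set $(g,\sigma,\tau_0)$ with $\sigma$ transverse-traceless and $\tau_0$ constant generates the solutions $\bar g=\phi^{q-2}g$, $\bar K=\phi^{-2}\sigma+\frac{\tau_0}{n}\bar g$ of the constraint equations, one for each positive solution $\phi$ of the Lichnerowicz–York equation $-2\kappa q\,\Delta_g\phi+R_g\phi-|\sigma|_g^2\phi^{-q-1}+\kappa\tau_0^2\phi^{q-1}=0$. A Kasner spacetime with exponents $\mathbf a=(a_1,\ldots,a_n)$ (satisfying $\sum a_k=1$, $\sum a_k^2=1$) and lengths $\bar{\boldsymbol\ell}$ is $\mathbb{R}_+\times T^n$ (expanding) or $\mathbb{R}_-\times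 T^n$ (contracting) with metric $-dt^2+\sum_k|t|^{2a_k}\bar\ell_k^2(ds^k)^2$, time-oriented by $\partial_t$. It is flat Kasner if $\mathbf a=(1,0,\ldots,0)$ and dual-to-flat Kasner if $\mathbf a=(-2/q,2/n,\ldots,2/n)$. A static toroidal spacetime is $\mathbb{R}\times T^n$ with metric $-dt^2+g_{\boldsymbol\ell}$ for some lengths $\boldsymbol\ell$. A data set "generates a slice" of a spacetime if the generated $(\bar g,\bar K)$ is the induced metric and second fundamental form $K(X,Y)=-\langle n,\nabla_XY\rangle$ ($n$ the future unit normal) of an embedded spacelike hypersurface; CMC means constant mean curvature $\mathrm{tr}\,\bar K$. *)

theory Defs
  imports "HOL-Analysis.Analysis"
begin

text \<open>The torus T^n is R^n modulo Z^n (unit coordinates s), with n = CARD('n).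
Functions/tensor fields on T^n are Z^n-periodic functions on real^'n. A symmetric 2-tensor
field is given by its components in the coordinates s: real^'n => 'n => 'n => real.
The distinguished index i1 plays the role of the first coordinate s^1.\<close>

definition qexp :: "real \<Rightarrow> real" where "qexp n = 2 * n / (n - 2)"
definition kappa :: "real \<Rightarrow> real" where "kappa n = (n - 1) / n"

definition pd :: "(real^'n \<Rightarrow> real) \<Rightarrow> 'n \<Rightarrow> real^'n \<Rightarrow> real" where
  "pd f i x = deriv (\<lambda>t. f (x + t *\<^sub>R axis i 1)) 0"

fun pds :: "(real^'n \<Rightarrow> real) \<Rightarrow> 'n list \<Rightarrow> real^'n \<Rightarrow> real" where
  "pds f [] = f"
| "pds f (i # is) = pd (pds f is) i"

definition smooth_fun :: "(real^'n \<Rightarrow> real) \<Rightarrow> bool" where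
  "smooth_fun f \<longleftrightarrow> (\<forall>is. continuous_on UNIV (pds f is) \<and>
      (\<forall>i x. (\<lambda>t. pds f is (x + t *\<^sub>R axis i 1)) differentiable (at 0)))"

definition periodic_fun :: "(real^'n \<Rightarrow> real) \<Rightarrow> bool" where
  "periodic_fun f \<longleftrightarrow> (\<forall>x k. f (x + axis k 1) = f x)"

definition int_vec :: "real^'n \<Rightarrow> bool" where
  "int_vec v \<longleftrightarrow> (\<forall>k. v $ k \<in> \<int>)"

definition flat_metric :: "('n::finite \<Rightarrow> real) \<Rightarrow> 'n \<Rightarrow> 'n \<Rightarrow> real" where
  "flat_metric l i j = (if i = j then (l i)^2 else 0)"

definition sigma_flat :: "'n::finite \<Rightarrow> ('n \<Rightarrow> real) \<Rightarrow> 'n \<Rightarrow> 'n \<Rightarrow> real" where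
  "sigma_flat i1 l i j =
     (if i = j then (if i = i1 then kappa (real CARD('n)) * (l i)^2
                     else - (1 / real CARD('n)) * (l i)^2) else 0)"

definition flat_laplacian :: "('n::finite \<Rightarrow> real) \<Rightarrow> (real^'n \<Rightarrow> real) \<Rightarrow> real^'n \<Rightarrow> real" where
  "flat_laplacian l \<phi> x = (\<Sum>k\<in>UNIV. pd (pd \<phi> k) k x / (l k)^2)"

definition tnorm2 :: "('n::finite \<Rightarrow> real) \<Rightarrow> ('n \<Rightarrow> 'n \<Rightarrow> real) \<Rightarrow> real" where
  "tnorm2 l S = (\<Sum>i\<in>UNIV. \<Sum>j\<in>UNIV. (S i j)^2 / ((l i)^2 * (l j)^2))"

definition flat_scalar_curvature :: "real" where "flat_scalar_curvature = 0"

definition LY_solution :: "('n::finite \<Rightarrow> real) \<Rightarrow> (real^'n \<Rightarrow> 'n \<Rightarrow> 'n \<Rightarrow> real) \<Rightarrow> real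
    \<Rightarrow> (real^'n \<Rightarrow> real) \<Rightarrow> bool" where
  "LY_solution l \<sigma> \<tau>0 \<phi> \<longleftrightarrow>
     smooth_fun \<phi> \<and> periodic_fun \<phi> \<and> (\<forall>x. \<phi> x > 0) \<and>
     (\<forall>x. - 2 * kappa (real CARD('n)) * qexp (real CARD('n)) * flat_laplacian l \<phi> x
          + flat_scalar_curvature * \<phi> x
          - tnorm2 l (\<sigma> x) * \<phi> x powr (- qexp (real CARD('n)) - 1)
          + kappa (real CARD('n)) * \<tau>0^2 * \<phi> x powr (qexp (real CARD('n)) - 1) = 0)"

definition gen_metric :: "('n::finite \<Rightarrow> real) \<Rightarrow> (real^'n \<Rightarrow> real) \<Rightarrow> real^'n \<Rightarrow> 'n \<Rightarrow> 'n \<Rightarrow> real" where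
  "gen_metric l \<phi> x i j = \<phi> x powr (qexp (real CARD('n)) - 2) * flat_metric l i j"

definition gen_K :: "('n::finite \<Rightarrow> real) \<Rightarrow> (real^'n \<Rightarrow> 'n \<Rightarrow> 'n \<Rightarrow> real) \<Rightarrow> real
    \<Rightarrow> (real^'n \<Rightarrow> real) \<Rightarrow> real^'n \<Rightarrow> 'n \<Rightarrow> 'n \<Rightarrow> real" where
  "gen_K l \<sigma> \<tau>0 \<phi> x i j = \<phi> x powr (-2) * \<sigma> x i j + \<tau>0 / real CARD('n) * gen_metric l \<phi> x i j"

text \<open>Spacetimes I x T^n with metric -dt^2 + sum_k f_k(t)^2 (ds^k)^2, time-oriented by d/dt.
Points/tangent vectors are pairs (t-component, s-components).\<close>
definition st_metric :: "('n::finite \<Rightarrow> real \<Rightarrow> real) \<Rightarrow> real \<Rightarrow> real \<times> (real^'n) \<Rightarrow> real \<times> (real^'n) \<Rightarrow> real" where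
  "st_metric f t X Z = - fst X * fst Z + (\<Sum>k\<in>UNIV. (f k t)^2 * (snd X $ k) * (snd Z $ k))"

text \<open>Coordinate tangent vector d_i F of the map F = (T, Y) (lift of a map T^n -> I x T^n).\<close>
definition tang :: "(real^'n::finite \<Rightarrow> real) \<Rightarrow> (real^'n \<Rightarrow> real^'n) \<Rightarrow> 'n \<Rightarrow> real^'n \<Rightarrow> real \<times> (real^'n)" where
  "tang T Y i x = (pd T i x, \<chi> k. pd (\<lambda>z. Y z $ k) i x)"

text \<open>Covariant derivative nabla_{d_i F} d_j F, using the Christoffel symbols
Gamma^t_kk = f_k f_k', Gamma^k_tk = Gamma^k_kt = f_k'/f_k.\<close>
definition accel :: "('n::finite \<Rightarrow> real \<Rightarrow> real) \<Rightarrow> (real^'n \<Rightarrow> real) \<Rightarrow> (real^'n \<Rightarrow> real^'n)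
    \<Rightarrow> 'n \<Rightarrow> 'n \<Rightarrow> real^'n \<Rightarrow> real \<times> (real^'n)" where
  "accel f T Y i j x =
     (pd (pd T j) i x + (\<Sum>k\<in>UNIV. f k (T x) * deriv (f k) (T x)
                                      * pd (\<lambda>z. Y z $ k) i x * pd (\<lambda>z. Y z $ k) j x),
      \<chi> k. pd (pd (\<lambda>z. Y z $ k) j) i x
            + deriv (f k) (T x) / f k (T x)
              * (pd T i x * pd (\<lambda>z. Y z $ k) j x + pd T j x * pd (\<lambda>z. Y z $ k) i x))"

definition mean_curv :: "(real^'n::finite \<Rightarrow> 'n \<Rightarrow> 'n \<Rightarrow> real) \<Rightarrow> (real^'n \<Rightarrow> 'n \<Rightarrow> 'n \<Rightarrow> real)
    \<Rightarrow> real^'n \<Rightarrow> real" where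
  "mean_curv gb Kb x = (\<Sum>i\<in>UNIV. \<Sum>j\<in>UNIV. matrix_inv (\<chi> a b. gb x a b) $ i $ j * Kb x i j)"

text \<open>(gb, Kb) on T^n is the induced metric and second fundamental form K(X,Y) = -<N, nabla_X Y>
(N the future unit normal) of an embedded spacelike CMC hypersurface of the spacetime
I x T^n with metric -dt^2 + sum_k f_k(t)^2 (ds^k)^2, via a smooth embedding of T^n given by
a lift F = (T, Y) : R^n -> I x R^n.\<close>
definition cmc_slice :: "real set \<Rightarrow> ('n::finite \<Rightarrow> real \<Rightarrow> real)
    \<Rightarrow> (real^'n \<Rightarrow> 'n \<Rightarrow> 'n \<Rightarrow> real) \<Rightarrow> (real^'n \<Rightarrow> 'n \<Rightarrow> 'n \<Rightarrow> real) \<Rightarrow> bool" where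
  "cmc_slice I f gb Kb \<longleftrightarrow>
    (\<exists>T Y N.
       smooth_fun T \<and> (\<forall>k. smooth_fun (\<lambda>z. Y z $ k)) \<and>
       (\<forall>x. T x \<in> I) \<and>
       (\<forall>x j. T (x + axis j 1) = T x \<and> int_vec (Y (x + axis j 1) - Y x)) \<and>
       (\<forall>x z. T x = T z \<and> int_vec (Y x - Y z) \<longrightarrow> int_vec (x - z)) \<and>
       (\<forall>x i j. st_metric f (T x) (tang T Y i x) (tang T Y j x) = gb x i j) \<and>
       (\<forall>x v. v \<noteq> 0 \<longrightarrow> (\<Sum>i\<in>UNIV. \<Sum>j\<in>UNIV. v $ i * v $ j * gb x i j) > 0) \<and>
       (\<forall>x. fst (N x) > 0 \<and> st_metric f (T x) (N x) (N x) = -1 \<and>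
            (\<forall>i. st_metric f (T x) (N x) (tang T Y i x) = 0)) \<and>
       (\<forall>x i j. - st_metric f (T x) (N x) (accel f T Y i j x) = Kb x i j) \<and>
       (\<exists>c. \<forall>x. mean_curv gb Kb x = c))"

definition kasner_exponents :: "('n::finite \<Rightarrow> real) \<Rightarrow> bool" where
  "kasner_exponents a \<longleftrightarrow> (\<Sum>k\<in>UNIV. a k) = 1 \<and> (\<Sum>k\<in>UNIV. (a k)^2) = 1"

definition kasner_f :: "('n \<Rightarrow> real) \<Rightarrow> ('n \<Rightarrow> real) \<Rightarrow> 'n \<Rightarrow> real \<Rightarrow> real" where
  "kasner_f a lb k t = \<bar>t\<bar> powr (a k) * lb k"

definition kasner_time :: "bool \<Rightarrow> real set" where
  "kasner_time expanding = (if expanding then {0<..} else {..<0})"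

definition flat_exps :: "'n \<Rightarrow> 'n \<Rightarrow> real" where
  "flat_exps i1 k = (if k = i1 then 1 else 0)"

definition dual_exps :: "'n::finite \<Rightarrow> 'n \<Rightarrow> real" where
  "dual_exps i1 k = (if k = i1 then - 2 / qexp (real CARD('n)) else 2 / real CARD('n))"

definition kasner_cmc_slice :: "('n::finite \<Rightarrow> real) \<Rightarrow> ('n \<Rightarrow> real) \<Rightarrow> bool
    \<Rightarrow> (real^'n \<Rightarrow> 'n \<Rightarrow> 'n \<Rightarrow> real) \<Rightarrow> (real^'n \<Rightarrow> 'n \<Rightarrow> 'n \<Rightarrow> real) \<Rightarrow> bool" where
  "kasner_cmc_slice a lb expanding gb Kb \<longleftrightarrow>
     kasner_exponents a \<and> (\<forall>k. lb k > 0) \<and>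
     cmc_slice (kasner_time expanding) (kasner_f a lb) gb Kb"

definition static_cmc_slice :: "('n::finite \<Rightarrow> real)
    \<Rightarrow> (real^'n \<Rightarrow> 'n \<Rightarrow> 'n \<Rightarrow> real) \<Rightarrow> (real^'n \<Rightarrow> 'n \<Rightarrow> 'n \<Rightarrow> real) \<Rightarrow> bool" where
  "static_cmc_slice l' gb Kb \<longleftrightarrow> (\<forall>k. l' k > 0) \<and> cmc_slice UNIV (\<lambda>k t. l' k) gb Kb"

definition torus_volume :: "(real^'n::finite \<Rightarrow> 'n \<Rightarrow> 'n \<Rightarrow> real) \<Rightarrow> real" where
  "torus_volume gb = integral (cbox 0 One) (\<lambda>x. sqrt (det (\<chi> i j. gb x i j)))"

end

theory Submission
  imports Defs
begin


lemma max1d: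
  fixes g gp :: "real \<Rightarrow> real"
  assumes gd: "\<And>t. (g has_real_derivative gp t) (at t)"
    and gpd: "(gp has_real_derivative d) (at 0)"
    and mx: "\<And>t. g t \<le> g 0"
  shows "d \<le> 0"
proof (rule ccontr)
  assume "\<not> d \<le> 0" hence dp: "d > 0" by simp
  have "gp 0 = 0"
    by (rule DERIV_local_max[OF gd[of 0], of 1]) (use mx in auto)
  obtain e where e: "e > 0" "\<And>h. h > 0 \<Longrightarrow> h < e \<Longrightarrow> gp 0 < gp (0 + h)"
    using DERIV_pos_inc_right[OF gpd dp] by blast
  have "\<exists>z. 0 < z \<and> z < e/2 \<and> g (e/2) - g 0 = (e/2 - 0) * gp z"
    by (rule MVT2) (use e gd in auto)
  then obtain z where z: "0 < z" "z < e/2" "g (e/2) - g 0 = (e/2) * gp z" by auto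
  have "gp z > 0" using e(2)[of z] z \<open>gp 0 = 0\<close> e by auto
  hence "(e/2) * gp z > 0" using e(1) by simp
  hence "g (e/2) - g 0 > 0" using z by simp
  thus False using mx[of "e/2"] by simp
qed

lemma shift_deriv:
  fixes F :: "real^'n \<Rightarrow> real"
  assumes "\<And>z. ((\<lambda>t. F (z + t *\<^sub>R axis k 1)) has_real_derivative Fd z) (at 0)"
  shows "((\<lambda>t. F (x + t *\<^sub>R axis k 1)) has_real_derivative Fd (x + s *\<^sub>R axis k 1)) (at s)"
proof -
  have "((\<lambda>h. F ((x + s *\<^sub>R axis k 1) + h *\<^sub>R axis k 1)) has_real_derivative Fd (x + s *\<^sub>R axis k 1)) (at 0)"
    by (rule assms)
  moreover have "(\<lambda>h. F ((x + s *\<^sub>R axis k 1) + h *\<^sub>R axis k 1)) = (\<lambda>h. (\<lambda>t. F (x + t *\<^sub>R axis k 1)) (h + s))"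
    by (auto simp: algebra_simps)
  ultimately show ?thesis using DERIV_shift[of "\<lambda>t. F (x + t *\<^sub>R axis k 1)" _ 0 s] by simp
qed

lemma pd_deriv:
  fixes F :: "real^'n \<Rightarrow> real"
  assumes "(\<lambda>t. F (z + t *\<^sub>R axis k 1)) differentiable (at 0)"
  shows "((\<lambda>t. F (z + t *\<^sub>R axis k 1)) has_real_derivative pd F k z) (at 0)"
  using assms unfolding pd_def by (simp add: DERIV_deriv_iff_real_differentiable)

lemma axis_max:
  fixes F Fd :: "real^'n \<Rightarrow> real"
  assumes "\<And>z. ((\<lambda>t. F (z + t *\<^sub>R axis k 1)) has_real_derivative Fd z) (at 0)"
    and "((\<lambda>t. Fd (xm + t *\<^sub>R axis k 1)) has_real_derivative d) (at 0)"
    and "\<And>x. F x \<le> F xm"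
  shows "d \<le> 0"
  by (rule max1d[where g="\<lambda>t. F (xm + t *\<^sub>R axis k 1)" and gp="\<lambda>t. Fd (xm + t *\<^sub>R axis k 1)"])
     (use shift_deriv[OF assms(1)] assms(2,3) in auto)

lemma axis_min:
  fixes F Fd :: "real^'n \<Rightarrow> real"
  assumes "\<And>z. ((\<lambda>t. F (z + t *\<^sub>R axis k 1)) has_real_derivative Fd z) (at 0)"
    and "((\<lambda>t. Fd (xm + t *\<^sub>R axis k 1)) has_real_derivative d) (at 0)"
    and "\<And>x. F xm \<le> F x"
  shows "d \<ge> 0"
proof -
  have "- d \<le> 0"
    by (rule axis_max[where F="\<lambda>x. - F x" and Fd="\<lambda>x. - Fd x" and k=k and xm=xm])
       (use assms in \<open>auto intro!: derivative_intros\<close>)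
  thus ?thesis by simp
qed

lemma periodic_nat:
  assumes "periodic_fun F"
  shows "F (x + real j *\<^sub>R axis k 1) = F x"
proof (induction j arbitrary: x)
  case 0 then show ?case by simp
next
  case (Suc j)
  have "F (x + real (Suc j) *\<^sub>R axis k 1) = F ((x + real j *\<^sub>R axis k 1) + axis k 1)"
    by (simp add: algebra_simps)
  also have "\<dots> = F (x + real j *\<^sub>R axis k 1)" using assms unfolding periodic_fun_def by blast
  finally show ?case using Suc by simp
qed

lemma periodic_int:
  assumes "periodic_fun F"
  shows "F (x + of_int j *\<^sub>R axis k 1) = F x"
proof (cases "j \<ge> 0")
  case True
  then obtain m where "j = int m" using nonneg_eq_int[OF True] by blast
  thus ?thesis using periodic_nat[OF assms] by simp
next
  case False
  hence "- j \<ge> 0" by simp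
  then obtain m where "- j = int m" using nonneg_eq_int by blast
  hence m: "j = - int m" by simp
  have "F x = F ((x + of_int j *\<^sub>R axis k 1) + real m *\<^sub>R axis k 1)" using m by simp
  also have "\<dots> = F (x + of_int j *\<^sub>R axis k 1)" by (rule periodic_nat[OF assms])
  finally show ?thesis by simp
qed

lemma vec_axis_sum: "(\<Sum>k\<in>UNIV. (v $ k) *\<^sub>R axis k (1::real)) = (v::real^'n)"
  by (simp add: vec_eq_iff axis_def if_distrib[where f="(*) _"] sum.delta cong: if_cong)

lemma periodic_sum:
  assumes "periodic_fun F" "finite S"
  shows "F (x + (\<Sum>k\<in>S. of_int (m k) *\<^sub>R axis k 1)) = F x"
  using assms(2)
proof (induction S arbitrary: x rule: finite_induct)
  case empty then show ?case by simp
next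
  case (insert a S)
  have "F (x + (\<Sum>k\<in>insert a S. of_int (m k) *\<^sub>R axis k 1))
      = F ((x + (\<Sum>k\<in>S. of_int (m k) *\<^sub>R axis k 1)) + of_int (m a) *\<^sub>R axis a 1)"
    using insert by (simp add: algebra_simps)
  also have "\<dots> = F (x + (\<Sum>k\<in>S. of_int (m k) *\<^sub>R axis k 1))" by (rule periodic_int[OF assms(1)])
  finally show ?case using insert by simp
qed

lemma periodic_intvec:
  fixes F :: "real^'n \<Rightarrow> real"
  assumes "periodic_fun F"
  shows "F (x + (\<chi> k. of_int (m k))) = F x"
proof -
  have "(\<chi> k. of_int (m k)) = (\<Sum>k\<in>UNIV. of_int (m k) *\<^sub>R axis k (1::real) :: real^'n)"
    using vec_axis_sum[of "\<chi> k. of_int (m k)"] by simp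
  thus ?thesis using periodic_sum[OF assms, of UNIV x m] by simp
qed

lemma reduce_cube:
  fixes x :: "real^'n"
  shows "\<exists>x' m. x' \<in> cbox 0 One \<and> x = x' + (\<chi> k. of_int (m k))"
proof (intro exI conjI)
  show "x - (\<chi> k. of_int \<lfloor>x $ k\<rfloor>) \<in> cbox 0 One"
  proof (unfold mem_box_cart, intro allI conjI)
    fix i
    have fl: "of_int \<lfloor>x $ i\<rfloor> \<le> x $ i" "x $ i < of_int \<lfloor>x $ i\<rfloor> + 1"
      by (simp_all add: of_int_floor_le real_of_int_floor_add_one_gt)
    have e: "(x - (\<chi> k. of_int \<lfloor>x $ k\<rfloor>)) $ i = x $ i - of_int \<lfloor>x $ i\<rfloor>" by simp
    have o: "(One::real^'n) $ i = 1" by (metis Cart_1 one_index)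
    have z: "(0::real^'n) $ i = 0" by simp
    show "(0::real^'n) $ i \<le> (x - (\<chi> k. of_int \<lfloor>x $ k\<rfloor>)) $ i"
      unfolding e z using fl by linarith
    show "(x - (\<chi> k. of_int \<lfloor>x $ k\<rfloor>)) $ i \<le> (One::real^'n) $ i"
      unfolding e o using fl by linarith
  qed
qed simp

lemma periodic_max:
  fixes F :: "real^'n \<Rightarrow> real"
  assumes "continuous_on UNIV F" "periodic_fun F"
  shows "\<exists>xm. \<forall>x. F x \<le> F xm"
proof -
  have ne: "cbox 0 (One::real^'n) \<noteq> {}" by (simp add: box_ne_empty)
  obtain xm where xm: "xm \<in> cbox 0 One" "\<And>y. y \<in> cbox 0 One \<Longrightarrow> F y \<le> F xm"
    using continuous_attains_sup[OF compact_cbox ne continuous_on_subset[OF assms(1) subset_UNIV]]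
    by blast
  have "F x \<le> F xm" for x
  proof -
    obtain x' m where "x' \<in> cbox 0 One" "x = x' + (\<chi> k. of_int (m k))" using reduce_cube by blast
    thus ?thesis using xm periodic_intvec[OF assms(2)] by simp
  qed
  thus ?thesis by blast
qed

lemma line_sum:
  fixes u :: "real^'n \<Rightarrow> real"
  assumes line: "\<And>z t k. u (z + t *\<^sub>R axis k 1) = u z" and fin: "finite S"
  shows "u (\<Sum>k\<in>S. f k *\<^sub>R axis k 1) = u 0"
  using fin
proof (induction S rule: finite_induct)
  case empty show ?case by simp
next
  case (insert a S)
  have e1: "(\<Sum>k\<in>insert a S. f k *\<^sub>R axis k 1) = f a *\<^sub>R axis a 1 + (\<Sum>k\<in>S. f k *\<^sub>R axis k 1)"
    by (rule sum.insert[OF insert.hyps(1,2)])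
  have e2: "u (f a *\<^sub>R axis a 1 + (\<Sum>k\<in>S. f k *\<^sub>R axis k 1)) = u (\<Sum>k\<in>S. f k *\<^sub>R axis k 1)"
    using line[of "\<Sum>k\<in>S. f k *\<^sub>R axis k 1" "f a" a] by (simp only: add.commute)
  show ?case by (simp only: e1 e2 insert.IH)
qed

lemma zero_partials_const:
  fixes u :: "real^'n \<Rightarrow> real"
  assumes "\<And>z k. ((\<lambda>t. u (z + t *\<^sub>R axis k 1)) has_real_derivative 0) (at 0)"
  shows "u x = u 0"
proof -
  have line: "u (z + t *\<^sub>R axis k 1) = u z" for z t k
  proof -
    have d: "((\<lambda>t. u (z + t *\<^sub>R axis k 1)) has_real_derivative 0) (at s)" for s
      using shift_deriv[where F=u and Fd="\<lambda>_. 0" and x=z and s=s and k=k] assms by simp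
    hence "\<forall>s. ((\<lambda>t. u (z + t *\<^sub>R axis k 1)) has_real_derivative 0) (at s)" by simp
    from DERIV_isconst_all[OF this, of t 0] show ?thesis by simp
  qed
  have "u (\<Sum>k\<in>UNIV. (x $ k) *\<^sub>R axis k 1) = u 0"
    by (rule line_sum[OF line]) simp
  thus ?thesis by (simp only: vec_axis_sum)
qed



lemma cont_shift:
  fixes h :: "real^'n \<Rightarrow> real"
  assumes "continuous_on UNIV h"
  shows "continuous_on S (\<lambda>x. h (x + c))"
  by (rule continuous_on_compose2[OF assms]) (auto intro!: continuous_intros)

lemma Phi_deriv:
  fixes h hd :: "real^'n \<Rightarrow> real"
  assumes hc: "continuous_on UNIV h" and hdc: "continuous_on UNIV hd"
    and hd: "\<And>z. ((\<lambda>t. h (z + t *\<^sub>R axis k 1)) has_real_derivative hd z) (at 0)"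
  shows "((\<lambda>s. integral (cbox 0 One) (\<lambda>x. h (x + (y + s *\<^sub>R axis k 1))))
            has_real_derivative integral (cbox 0 One) (\<lambda>x. hd (x + y))) (at 0)"
proof -
  have "((\<lambda>s. integral (cbox 0 One) (\<lambda>x. h (x + (y + s *\<^sub>R axis k 1))))
            has_real_derivative integral (cbox 0 One) (\<lambda>x. hd (x + (y + 0 *\<^sub>R axis k 1)))) (at 0 within UNIV)"
  proof (rule leibniz_rule_field_derivative[where f="\<lambda>s x. h (x + (y + s *\<^sub>R axis k 1))"
        and fx="\<lambda>s x. hd (x + (y + s *\<^sub>R axis k 1))"])
    fix s :: real and x :: "real^'n"
    have "((\<lambda>t. h ((x + y) + t *\<^sub>R axis k 1)) has_real_derivative hd ((x + y) + s *\<^sub>R axis k 1)) (at s)"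
      by (rule shift_deriv[OF hd])
    thus "((\<lambda>s. h (x + (y + s *\<^sub>R axis k 1))) has_real_derivative hd (x + (y + s *\<^sub>R axis k 1))) (at s within UNIV)"
      by (simp add: add.assoc)
  next
    fix s :: real
    show "(\<lambda>x. h (x + (y + s *\<^sub>R axis k 1))) integrable_on cbox 0 One"
      by (rule integrable_continuous) (rule cont_shift[OF hc])
  next
    have "continuous_on (UNIV \<times> cbox 0 One) (\<lambda>p. hd (snd p + (y + fst p *\<^sub>R axis k (1::real))))"
      by (rule continuous_on_compose2[OF hdc]) (auto intro!: continuous_intros)
    thus "continuous_on (UNIV \<times> cbox 0 One) (\<lambda>(s, x). hd (x + (y + s *\<^sub>R axis k 1)))"
      by (simp add: case_prod_beta)
  qed auto
  thus ?thesis by simp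
qed

lemma Phi_cont:
  fixes h :: "real^'n \<Rightarrow> real"
  assumes hc: "continuous_on UNIV h"
  shows "continuous_on UNIV (\<lambda>y. integral (cbox 0 One) (\<lambda>x. h (x + y)))"
proof (rule integral_continuous_on_param)
  have "continuous_on (UNIV \<times> cbox 0 One) (\<lambda>p. h (snd p + fst p))"
    by (rule continuous_on_compose2[OF hc]) (auto intro!: continuous_intros)
  thus "continuous_on (UNIV \<times> cbox 0 One) (\<lambda>(y, x). h (x + y))"
    by (simp add: case_prod_beta)
qed

lemma smooth_facts:
  fixes u :: "real^'n \<Rightarrow> real"
  assumes "smooth_fun u"
  shows "continuous_on UNIV u" "continuous_on UNIV (pd u k)" "continuous_on UNIV (pd (pd u k) k)"
    "((\<lambda>t. u (z + t *\<^sub>R axis k 1)) has_real_derivative pd u k z) (at 0)"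
    "((\<lambda>t. pd u k (z + t *\<^sub>R axis k 1)) has_real_derivative pd (pd u k) k z) (at 0)"
proof -
  have a: "continuous_on UNIV (pds u is)" "\<And>i x. (\<lambda>t. pds u is (x + t *\<^sub>R axis i 1)) differentiable (at 0)" for "is"
    using assms unfolding smooth_fun_def by auto
  show "continuous_on UNIV u" using a(1)[of "[]"] by simp
  show "continuous_on UNIV (pd u k)" using a(1)[of "[k]"] by simp
  show "continuous_on UNIV (pd (pd u k) k)" using a(1)[of "[k,k]"] by simp
  show "((\<lambda>t. u (z + t *\<^sub>R axis k 1)) has_real_derivative pd u k z) (at 0)"
    using pd_deriv[OF a(2)[of "[]"]] by simp
  show "((\<lambda>t. pd u k (z + t *\<^sub>R axis k 1)) has_real_derivative pd (pd u k) k z) (at 0)"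
    using pd_deriv[OF a(2)[of "[k]"]] by simp
qed

lemma pd_periodic:
  fixes u :: "real^'n \<Rightarrow> real"
  assumes "periodic_fun u"
  shows "periodic_fun (pd u k)"
  unfolding periodic_fun_def
proof (intro allI)
  fix z :: "real^'n" and j
  have "(\<lambda>t. u (z + axis j 1 + t *\<^sub>R axis k 1)) = (\<lambda>t. u (z + t *\<^sub>R axis k 1))"
  proof
    fix t
    have "u (z + axis j 1 + t *\<^sub>R axis k 1) = u ((z + t *\<^sub>R axis k 1) + axis j 1)"
      by (simp add: algebra_simps)
    also have "\<dots> = u (z + t *\<^sub>R axis k 1)" using assms unfolding periodic_fun_def by blast
    finally show "u (z + axis j 1 + t *\<^sub>R axis k 1) = u (z + t *\<^sub>R axis k 1)" .
  qed
  thus "pd u k (z + axis j 1) = pd u k z" unfolding pd_def by simp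
qed

lemma harmonic_const:
  fixes u :: "real^'n \<Rightarrow> real" and l :: "'n \<Rightarrow> real"
  assumes sm: "smooth_fun u" and per: "periodic_fun u" and lpos: "\<forall>k. l k > 0"
    and harm: "\<And>x. flat_laplacian l u x = 0"
  shows "u x = u 0"
proof -
  note sf = smooth_facts[OF sm]
  have lk: "l k \<noteq> 0" for k using lpos[rule_format, of k] by simp
  define h0 where "h0 = (\<lambda>z. u z * u z)"
  define h1 where "h1 = (\<lambda>k z. 2 * (u z * pd u k z))"
  define h2 where "h2 = (\<lambda>k z. 2 * (pd u k z * pd u k z + u z * pd (pd u k) k z))"
  have c0: "continuous_on UNIV h0" unfolding h0_def using sf by (auto intro!: continuous_intros)
  have c1: "continuous_on UNIV (h1 k)" for k unfolding h1_def using sf by (auto intro!: continuous_intros)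
  have c2: "continuous_on UNIV (h2 k)" for k unfolding h2_def using sf by (auto intro!: continuous_intros)
  have d0: "((\<lambda>t. h0 (z + t *\<^sub>R axis k 1)) has_real_derivative h1 k z) (at 0)" for z k
    unfolding h0_def h1_def
    by (rule DERIV_cong[OF DERIV_mult[OF sf(4) sf(4)]]) simp
  have d1: "((\<lambda>t. h1 k (z + t *\<^sub>R axis k 1)) has_real_derivative h2 k z) (at 0)" for z k
    unfolding h1_def h2_def
    by (rule DERIV_cong[OF DERIV_cmult[OF DERIV_mult[OF sf(4) sf(5)]]]) simp
  define P0 where "P0 = (\<lambda>y. integral (cbox 0 One) (\<lambda>x. h0 (x + y)))"
  define P1 where "P1 = (\<lambda>k y. integral (cbox 0 One) (\<lambda>x. h1 k (x + y)))"
  define P2 where "P2 = (\<lambda>k y. integral (cbox 0 One) (\<lambda>x. h2 k (x + y)))"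
  have e0: "((\<lambda>t. P0 (y + t *\<^sub>R axis k 1)) has_real_derivative P1 k y) (at 0)" for y k
    unfolding P0_def P1_def by (rule Phi_deriv[OF c0 c1 d0])
  have e1: "((\<lambda>t. P1 k (y + t *\<^sub>R axis k 1)) has_real_derivative P2 k y) (at 0)" for y k
    unfolding P1_def P2_def by (rule Phi_deriv[OF c1 c2 d1])
  have perh0: "periodic_fun h0" using per unfolding periodic_fun_def h0_def by simp
  have pP0: "periodic_fun P0" unfolding periodic_fun_def P0_def
  proof (intro allI)
    fix y :: "real^'n" and j
    have "(\<lambda>x. h0 (x + (y + axis j 1))) = (\<lambda>x. h0 (x + y))"
    proof
      fix x
      have "h0 (x + (y + axis j 1)) = h0 ((x + y) + axis j 1)" by (simp add: add.assoc)
      thus "h0 (x + (y + axis j 1)) = h0 (x + y)" using perh0 unfolding periodic_fun_def by simp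
    qed
    thus "integral (cbox 0 One) (\<lambda>x. h0 (x + (y + axis j 1))) = integral (cbox 0 One) (\<lambda>x. h0 (x + y))"
      by simp
  qed
  have cP0: "continuous_on UNIV P0" unfolding P0_def by (rule Phi_cont[OF c0])
  obtain y0 where y0: "\<And>y. P0 y \<le> P0 y0"
    using periodic_max[OF cP0 pP0] by blast
  have P2le: "P2 k y0 \<le> 0" for k
    by (rule axis_max[OF e0 e1 y0])
  define E where "E = (\<lambda>z. \<Sum>k\<in>UNIV. (pd u k z * pd u k z) / (l k)^2)"
  have cE: "continuous_on UNIV E" unfolding E_def using sf lk by (auto intro!: continuous_intros)
  have Enn: "E z \<ge> 0" for z unfolding E_def by (auto intro!: sum_nonneg)
  have h2sum: "(\<Sum>k\<in>UNIV. h2 k z / (l k)^2) = 2 * E z" for z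
  proof -
    have hk: "h2 k z / (l k)^2 = 2 * (pd u k z * pd u k z / (l k)^2) + 2 * u z * (pd (pd u k) k z / (l k)^2)" for k
      unfolding h2_def using lk[of k] by (simp add: field_simps)
    have "(\<Sum>k\<in>UNIV. h2 k z / (l k)^2) = 2 * E z + 2 * u z * flat_laplacian l u z"
      unfolding hk E_def flat_laplacian_def by (simp only: sum.distrib sum_distrib_left)
    thus ?thesis using harm by simp
  qed
  have int2: "(\<lambda>x. h2 k (x + y0) / (l k)^2) integrable_on cbox 0 One" for k
    by (rule integrable_continuous) (use lk in \<open>auto intro!: continuous_intros cont_shift[OF c2]\<close>)
  have "integral (cbox 0 One) (\<lambda>x. 2 * E (x + y0)) = (\<Sum>k\<in>UNIV. P2 k y0 / (l k)^2)"
  proof -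
    have "integral (cbox 0 One) (\<lambda>x. 2 * E (x + y0))
        = integral (cbox 0 One) (\<lambda>x. \<Sum>k\<in>UNIV. h2 k (x + y0) / (l k)^2)"
      using h2sum by simp
    also have "\<dots> = (\<Sum>k\<in>UNIV. integral (cbox 0 One) (\<lambda>x. h2 k (x + y0) / (l k)^2))"
      by (rule integral_sum) (use int2 in auto)
    also have "\<dots> = (\<Sum>k\<in>UNIV. P2 k y0 / (l k)^2)"
      unfolding P2_def by (simp add: divide_inverse)
    finally show ?thesis .
  qed
  also have "\<dots> \<le> 0"
    by (rule sum_nonpos, rule divide_nonpos_pos, rule P2le) (use lk in simp)
  finally have ile: "integral (cbox 0 One) (\<lambda>x. 2 * E (x + y0)) \<le> 0" .
  have cE2: "continuous_on (cbox 0 One) (\<lambda>x. 2 * E (x + y0))"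
    by (auto intro!: continuous_intros cont_shift[OF cE])
  have "integral (cbox 0 One) (\<lambda>x. 2 * E (x + y0)) \<ge> 0"
    by (rule integral_nonneg[OF integrable_continuous[OF cE2]]) (simp add: Enn)
  hence "integral (cbox 0 One) (\<lambda>x. 2 * E (x + y0)) = 0" using ile by simp
  hence Ez: "\<forall>x\<in>cbox 0 One. 2 * E (x + y0) = 0"
    using integral_cbox_eq_0_iff[OF cE2] Enn by (simp add: box_ne_empty)
  have pE: "periodic_fun E"
    using pd_periodic[OF per] unfolding E_def periodic_fun_def by simp
  have E0: "E z = 0" for z
  proof -
    obtain x' m where "x' \<in> cbox 0 One" "z - y0 = x' + (\<chi> k. of_int (m k))" using reduce_cube by blast
    hence "z = (x' + y0) + (\<chi> k. of_int (m k))" by (simp add: algebra_simps)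
    hence "E z = E (x' + y0)" using periodic_intvec[OF pE] by simp
    thus ?thesis using Ez \<open>x' \<in> cbox 0 One\<close> by simp
  qed
  have pd0: "pd u k z = 0" for k z
  proof -
    have "(\<Sum>k\<in>UNIV. (pd u k z * pd u k z) / (l k)^2) = 0" using E0[of z] unfolding E_def .
    hence "\<forall>k\<in>UNIV. (pd u k z * pd u k z) / (l k)^2 = 0"
      using sum_nonneg_eq_0_iff[of UNIV "\<lambda>k. (pd u k z * pd u k z) / (l k)^2"] by simp
    hence "pd u k z * pd u k z / (l k)^2 = 0" by blast
    thus ?thesis using lk[of k] by simp
  qed
  show ?thesis
  proof (rule zero_partials_const)
    fix z k
    show "((\<lambda>t. u (z + t *\<^sub>R axis k 1)) has_real_derivative 0) (at 0)"
      using sf(4)[where z=z and k=k] pd0[of k z] by simp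
  qed
qed



lemma lap_max:
  fixes u :: "real^'n \<Rightarrow> real"
  assumes sm: "smooth_fun u" and lpos: "\<forall>k. l k > 0" and mx: "\<And>x. u x \<le> u xm"
  shows "flat_laplacian l u xm \<le> 0"
  unfolding flat_laplacian_def
proof (rule sum_nonpos)
  fix k
  have "pd (pd u k) k xm \<le> 0"
    by (rule axis_max[OF smooth_facts(4)[OF sm] smooth_facts(5)[OF sm] mx])
  thus "pd (pd u k) k xm / (l k)^2 \<le> 0" using lpos[rule_format, of k] by (simp add: divide_nonpos_pos)
qed

lemma lap_min:
  fixes u :: "real^'n \<Rightarrow> real"
  assumes sm: "smooth_fun u" and lpos: "\<forall>k. l k > 0" and mn: "\<And>x. u xm \<le> u x"
  shows "flat_laplacian l u xm \<ge> 0"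
  unfolding flat_laplacian_def
proof (rule sum_nonneg)
  fix k
  have "pd (pd u k) k xm \<ge> 0"
    by (rule axis_min[OF smooth_facts(4)[OF sm] smooth_facts(5)[OF sm] mn])
  thus "pd (pd u k) k xm / (l k)^2 \<ge> 0" using lpos[rule_format, of k] by simp
qed

lemma periodic_min:
  fixes F :: "real^'n \<Rightarrow> real"
  assumes "continuous_on UNIV F" "periodic_fun F"
  shows "\<exists>x0. \<forall>x. F x0 \<le> F x"
proof -
  have "continuous_on UNIV (\<lambda>x. - F x)" using assms(1) by (auto intro!: continuous_intros)
  moreover have "periodic_fun (\<lambda>x. - F x)" using assms(2) unfolding periodic_fun_def by simp
  ultimately obtain x0 where "\<forall>x. - F x \<le> - F x0" using periodic_max by blast
  thus ?thesis by auto
qed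

lemma nq_facts:
  assumes "CARD('n::finite) \<ge> 3"
  shows "qexp (real CARD('n)) > 2" "kappa (real CARD('n)) > 0"
    "qexp (real CARD('n)) = 2 * real CARD('n) / (real CARD('n) - 2)"
    "kappa (real CARD('n)) = (real CARD('n) - 1) / real CARD('n)"
proof -
  have n: "real CARD('n) \<ge> 3" using assms by simp
  show "qexp (real CARD('n)) > 2" unfolding qexp_def using n by (simp add: field_simps)
  show "kappa (real CARD('n)) > 0" unfolding kappa_def using n by simp
qed (simp_all add: qexp_def kappa_def)

lemma LY_eq:
  fixes l :: "'n::finite \<Rightarrow> real"
  assumes "LY_solution l \<sigma> \<tau>0 \<phi>"
  shows "smooth_fun \<phi>" "periodic_fun \<phi>" "\<And>x. \<phi> x > 0"
    "\<And>x. 2 * kappa (real CARD('n)) * qexp (real CARD('n)) * flat_laplacian l \<phi> x =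
       kappa (real CARD('n)) * \<tau>0^2 * \<phi> x powr (qexp (real CARD('n)) - 1)
       - tnorm2 l (\<sigma> x) * \<phi> x powr (- qexp (real CARD('n)) - 1)"
proof -
  show "smooth_fun \<phi>" "periodic_fun \<phi>" "\<And>x. \<phi> x > 0"
    using assms unfolding LY_solution_def by auto
  fix x
  have "- 2 * kappa (real CARD('n)) * qexp (real CARD('n)) * flat_laplacian l \<phi> x
          + flat_scalar_curvature * \<phi> x
          - tnorm2 l (\<sigma> x) * \<phi> x powr (- qexp (real CARD('n)) - 1)
          + kappa (real CARD('n)) * \<tau>0^2 * \<phi> x powr (qexp (real CARD('n)) - 1) = 0"
    using assms unfolding LY_solution_def by blast
  thus "2 * kappa (real CARD('n)) * qexp (real CARD('n)) * flat_laplacian l \<phi> x =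
       kappa (real CARD('n)) * \<tau>0^2 * \<phi> x powr (qexp (real CARD('n)) - 1)
       - tnorm2 l (\<sigma> x) * \<phi> x powr (- qexp (real CARD('n)) - 1)"
    unfolding flat_scalar_curvature_def by linarith
qed

lemma sum_if_single:
  fixes a b :: real
  shows "(\<Sum>i\<in>(UNIV::'n::finite set). if i = i1 then a else b) = a + (real CARD('n) - 1) * b"
proof -
  have "(\<Sum>i\<in>(UNIV::'n set). if i = i1 then a else b) = (\<Sum>i\<in>(UNIV::'n set). b + (if i = i1 then a - b else 0))"
    by (rule sum.cong) auto
  also have "\<dots> = real CARD('n) * b + (a - b)" by (simp add: sum.distrib)
  finally show ?thesis by (simp add: algebra_simps)
qed

lemma tnorm2_sigma:
  fixes l :: "'n::finite \<Rightarrow> real"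
  assumes lpos: "\<forall>k. l k > 0"
  shows "tnorm2 l (\<lambda>i j. \<mu> * sigma_flat i1 l i j) = \<mu>^2 * kappa (real CARD('n))"
proof -
  let ?n = "real CARD('n)"
  have n0: "?n > 0" by simp
  have lk: "l k \<noteq> 0" for k using lpos[rule_format, of k] by simp
  have inner: "(\<Sum>j\<in>UNIV. (\<mu> * sigma_flat i1 l i j)^2 / ((l i)^2 * (l j)^2))
      = (\<mu> * sigma_flat i1 l i i)^2 / ((l i)^2 * (l i)^2)" for i
  proof -
    have "(\<Sum>j\<in>UNIV. (\<mu> * sigma_flat i1 l i j)^2 / ((l i)^2 * (l j)^2))
        = (\<Sum>j\<in>UNIV. if j = i then (\<mu> * sigma_flat i1 l i i)^2 / ((l i)^2 * (l i)^2) else 0)"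
      by (rule sum.cong) (auto simp: sigma_flat_def)
    thus ?thesis by simp
  qed
  have val: "(\<mu> * sigma_flat i1 l i i)^2 / ((l i)^2 * (l i)^2)
      = (if i = i1 then \<mu>^2 * (kappa ?n)^2 else \<mu>^2 / ?n^2)" for i
    unfolding sigma_flat_def using lk[of i] by (auto simp: field_simps power2_eq_square)
  have "tnorm2 l (\<lambda>i j. \<mu> * sigma_flat i1 l i j)
      = (\<Sum>i\<in>UNIV. if i = i1 then \<mu>^2 * (kappa ?n)^2 else \<mu>^2 / ?n^2)"
    unfolding tnorm2_def inner val by simp
  also have "\<dots> = \<mu>^2 * (kappa ?n)^2 + (?n - 1) * (\<mu>^2 / ?n^2)" by (rule sum_if_single)
  also have "\<dots> = \<mu>^2 * kappa ?n" unfolding kappa_def using n0 by (simp add: field_simps power2_eq_square)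
  finally show ?thesis .
qed



lemma pd_const: "pd (\<lambda>x::real^'n. c) i = (\<lambda>x. 0)"
  unfolding pd_def by simp

lemma pds_const: "pds (\<lambda>x::real^'n. c) is = (\<lambda>x. if is = [] then c else 0)"
  by (induction "is") (auto simp: pd_const)

lemma coord_line: "(\<lambda>t. (x + t *\<^sub>R axis i 1) $ k) = (\<lambda>t. x $ k + t * (axis i (1::real) $ k))"
  by auto

lemma pd_coord: "pd (\<lambda>z::real^'n. z $ k) i = (\<lambda>z. axis i (1::real) $ k)"
proof
  fix x :: "real^'n"
  have "((\<lambda>t. x $ k + t * (axis i (1::real) $ k)) has_real_derivative axis i 1 $ k) (at 0)"
    by (auto intro!: derivative_eq_intros)
  thus "pd (\<lambda>z. z $ k) i x = axis i 1 $ k"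
    unfolding pd_def coord_line by (rule DERIV_imp_deriv)
qed

lemma pds_coord: "pds (\<lambda>z::real^'n. z $ k) is = (\<lambda>z. z $ k) \<or> (\<exists>c. pds (\<lambda>z::real^'n. z $ k) is = (\<lambda>z. c))"
proof (induction "is")
  case Nil then show ?case by simp
next
  case (Cons i "is")
  then show ?case
  proof
    assume "pds (\<lambda>z::real^'n. z $ k) is = (\<lambda>z. z $ k)"
    thus ?thesis by (intro disjI2 exI[of _ "axis i 1 $ k"]) (simp add: pd_coord)
  next
    assume "\<exists>c. pds (\<lambda>z::real^'n. z $ k) is = (\<lambda>z. c)"
    thus ?thesis by (auto simp: pd_const)
  qed
qed

lemma smooth_const: "smooth_fun (\<lambda>x::real^'n. c)"
  unfolding smooth_fun_def pds_const by (auto intro!: derivative_eq_intros)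

lemma smooth_coord: "smooth_fun (\<lambda>z::real^'n. z $ k)"
  unfolding smooth_fun_def
proof (intro allI conjI)
  fix "is" :: "'n list"
  from pds_coord[of k "is"]
  show "continuous_on UNIV (pds (\<lambda>z. z $ k) is)"
    by (auto intro!: continuous_intros)
  fix i and x :: "real^'n"
  from pds_coord[of k "is"]
  show "(\<lambda>t. pds (\<lambda>z. z $ k) is (x + t *\<^sub>R axis i 1)) differentiable at 0"
    by (auto simp: coord_line intro!: derivative_intros)
qed

lemma axis_sum2: "(\<Sum>k\<in>UNIV. a k * (axis i (1::real) $ k) * (axis j (1::real) $ k)) = (if i = j then a i else 0)"
  by (auto simp: axis_def if_distrib[where f="\<lambda>x. _ * x"] cong: if_cong)

lemma sum_diag:
  fixes d :: "'n::finite \<Rightarrow> real"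
  shows "(\<Sum>i\<in>UNIV. \<Sum>j\<in>UNIV. v $ i * v $ j * (if i = j then d i else 0)) = (\<Sum>i\<in>UNIV. (v $ i)^2 * d i)"
  by (rule sum.cong) (auto simp: if_distrib[where f="\<lambda>x. _ * x"] power2_eq_square cong: if_cong)

lemma slice_const:
  fixes f :: "'n::finite \<Rightarrow> real \<Rightarrow> real" and gb Kb :: "real^'n \<Rightarrow> 'n \<Rightarrow> 'n \<Rightarrow> real"
  assumes tI: "tz \<in> I"
    and fd: "\<And>k. (f k has_real_derivative fd k) (at tz)"
    and fnz: "\<And>k. f k tz \<noteq> 0"
    and gb: "\<And>x i j. gb x i j = (if i = j then (f i tz)^2 else 0)"
    and Kb: "\<And>x i j. Kb x i j = (if i = j then f i tz * fd i else 0)"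
  shows "cmc_slice I f gb Kb"
  unfolding cmc_slice_def
proof (intro exI[of _ "\<lambda>x. tz"] exI[of _ "\<lambda>x. x"] exI[of _ "\<lambda>x. (1, 0)"] conjI allI impI)
  have tang: "tang (\<lambda>x. tz) (\<lambda>x. x) i x = (0, axis i 1)" for i x
    unfolding tang_def pd_const pd_coord by (simp add: vec_lambda_eta)
  have dv: "deriv (f k) tz = fd k" for k using fd by (rule DERIV_imp_deriv)
  show "smooth_fun (\<lambda>x::real^'n. tz)" by (rule smooth_const)
  show "smooth_fun (\<lambda>z::real^'n. z $ k)" for k by (rule smooth_coord)
  show "tz \<in> I" by (rule tI)
  show "tz = tz" for x :: "real^'n" by simp
  show "int_vec (x + axis j 1 - x)" for x :: "real^'n" and j
    unfolding int_vec_def by (auto simp: axis_def)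
  show "int_vec (x - z)" if "tz = tz \<and> int_vec (x - z)" for x z :: "real^'n" using that by simp
  show "st_metric f tz (tang (\<lambda>x. tz) (\<lambda>x. x) i x) (tang (\<lambda>x. tz) (\<lambda>x. x) j x) = gb x i j" for x i j
    unfolding tang st_metric_def gb by (simp add: axis_sum2)
  show "0 < (\<Sum>i\<in>UNIV. \<Sum>j\<in>UNIV. v $ i * v $ j * gb x i j)" if "v \<noteq> 0" for x v
  proof -
    obtain k where k: "v $ k \<noteq> 0" using \<open>v \<noteq> 0\<close> by (metis vec_eq_iff zero_index)
    have "(\<Sum>i\<in>UNIV. \<Sum>j\<in>UNIV. v $ i * v $ j * gb x i j) = (\<Sum>i\<in>UNIV. (v $ i)^2 * (f i tz)^2)"
      unfolding gb by (rule sum_diag)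
    also have "\<dots> > 0"
      by (rule sum_pos2[of UNIV k]) (use k fnz in auto)
    finally show ?thesis .
  qed
  show "0 < fst (1::real, 0::real^'n)" by simp
  show "st_metric f tz (1, 0) (1, 0) = -1" unfolding st_metric_def by simp
  show "st_metric f tz (1, 0) (tang (\<lambda>x. tz) (\<lambda>x. x) i x) = 0" for x i
    unfolding st_metric_def tang by simp
  show "- st_metric f tz (1, 0) (accel f (\<lambda>x. tz) (\<lambda>x. x) i j x) = Kb x i j" for x i j
    unfolding st_metric_def accel_def pd_const pd_coord Kb dv
    by (simp add: axis_sum2)
  show "\<exists>c. \<forall>x. mean_curv gb Kb x = c"
    by (rule exI[of _ "mean_curv gb Kb 0"]) (simp add: mean_curv_def gb Kb)
qed



lemma const_sol:
  fixes l :: "'n::finite \<Rightarrow> real" and \<sigma>0 :: "'n \<Rightarrow> 'n \<Rightarrow> real"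
  assumes c: "c > 0"
    and eq: "kappa (real CARD('n)) * \<tau>0^2 * c powr (qexp (real CARD('n)) - 1)
             = tnorm2 l \<sigma>0 * c powr (- qexp (real CARD('n)) - 1)"
  shows "LY_solution l (\<lambda>x. \<sigma>0) \<tau>0 (\<lambda>x::real^'n. c)"
proof -
  have L: "flat_laplacian l (\<lambda>x::real^'n. c) x = 0" for x
    unfolding flat_laplacian_def pd_const by simp
  show ?thesis
    unfolding LY_solution_def
    using smooth_const[of c] c eq L by (auto simp: periodic_fun_def flat_scalar_curvature_def)
qed

lemma const_eq_value:
  fixes c \<mu> \<tau>0 k q :: real
  assumes c: "c > 0" and k: "k > 0" and t: "\<tau>0 \<noteq> 0"
    and eq: "k * \<tau>0^2 * c powr (q - 1) = \<mu>^2 * k * c powr (- q - 1)"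
  shows "c powr q = \<bar>\<mu> / \<tau>0\<bar>"
proof -
  define P where "P = c powr q"
  have P: "P > 0" unfolding P_def using c by simp
  have A: "c powr (q - 1) = P / c" unfolding P_def using c by (simp add: powr_diff)
  have B: "c powr (- q - 1) = 1 / (P * c)" unfolding P_def using c
    by (simp add: powr_diff powr_minus_divide)
  have "k * \<tau>0^2 * (P / c) = \<mu>^2 * k * (1 / (P * c))" using eq A B by simp
  hence "\<tau>0^2 * P^2 = \<mu>^2" using c P k by (simp add: field_simps power2_eq_square)
  hence "(\<bar>\<tau>0\<bar> * P)^2 = \<bar>\<mu>\<bar>^2" by (simp add: power_mult_distrib)
  hence "\<bar>\<tau>0\<bar> * P = \<bar>\<mu>\<bar>" using P by (subst (asm) power2_eq_iff_nonneg) auto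
  thus ?thesis unfolding P_def[symmetric] using t by (simp add: field_simps abs_divide)
qed

lemma const12:
  fixes l :: "'n::finite \<Rightarrow> real" and \<phi> :: "real^'n \<Rightarrow> real"
  assumes n3: "CARD('n) \<ge> 3" and lpos: "\<forall>k. l k > 0" and t: "\<tau>0 \<noteq> 0" and m: "\<mu> \<noteq> 0"
    and LY: "LY_solution l (\<lambda>x i j. \<mu> * sigma_flat i1 l i j) \<tau>0 \<phi>"
  shows "\<exists>c>0. (\<forall>x. \<phi> x = c) \<and> c powr qexp (real CARD('n)) = \<bar>\<mu> / \<tau>0\<bar>"
proof -
  define q where "q = qexp (real CARD('n))"
  define \<kappa> where "\<kappa> = kappa (real CARD('n))"
  have q2: "q > 2" and kp: "\<kappa> > 0" using nq_facts[OF n3] unfolding q_def \<kappa>_def by auto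
  have S: "tnorm2 l ((\<lambda>x i j. \<mu> * sigma_flat i1 l i j) x) = \<mu>^2 * \<kappa>"
    using tnorm2_sigma[OF lpos] unfolding \<kappa>_def by simp
  note ly = LY_eq[OF LY]
  have eqn: "2 * \<kappa> * q * flat_laplacian l \<phi> x = \<kappa> * \<tau>0^2 * \<phi> x powr (q - 1) - \<mu>^2 * \<kappa> * \<phi> x powr (- q - 1)" for x
    using ly(4)[of x] S unfolding q_def \<kappa>_def by simp
  define H where "H = (\<lambda>p. \<kappa> * \<tau>0^2 * p powr (q - 1) - \<mu>^2 * \<kappa> * p powr (- q - 1))"
  have Hm: "H p < H p'" if "0 < p" "p < p'" for p p'
  proof -
    have a: "p powr (q - 1) < p' powr (q - 1)" by (rule powr_less_mono2) (use q2 that in auto)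
    have b: "p' powr (- q - 1) < p powr (- q - 1)" by (rule powr_less_mono2_neg) (use q2 that in auto)
    have kt: "\<kappa> * \<tau>0^2 > 0" using kp t by simp
    have mk: "\<mu>^2 * \<kappa> > 0" using kp m by simp
    have "\<kappa> * \<tau>0^2 * p powr (q - 1) < \<kappa> * \<tau>0^2 * p' powr (q - 1)"
      using mult_strict_left_mono[OF a kt] .
    moreover have "\<mu>^2 * \<kappa> * p' powr (- q - 1) < \<mu>^2 * \<kappa> * p powr (- q - 1)"
      using mult_strict_left_mono[OF b mk] .
    ultimately show ?thesis unfolding H_def by linarith
  qed
  have sf: "continuous_on UNIV \<phi>" using smooth_facts(1)[OF ly(1)] .
  obtain xM where xM: "\<And>x. \<phi> x \<le> \<phi> xM" using periodic_max[OF sf ly(2)] by blast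
  obtain xm where xm: "\<And>x. \<phi> xm \<le> \<phi> x" using periodic_min[OF sf ly(2)] by blast
  have LM: "flat_laplacian l \<phi> xM \<le> 0" by (rule lap_max[OF ly(1) lpos xM])
  have Lm: "flat_laplacian l \<phi> xm \<ge> 0" by (rule lap_min[OF ly(1) lpos xm])
  have kq: "2 * \<kappa> * q > 0" using kp q2 by simp
  have HM: "H (\<phi> xM) \<le> 0"
  proof -
    have "2 * \<kappa> * q * flat_laplacian l \<phi> xM \<le> 0" by (rule mult_nonneg_nonpos) (use LM kq in auto)
    thus ?thesis using eqn[of xM] unfolding H_def by simp
  qed
  have Hm0: "H (\<phi> xm) \<ge> 0"
  proof -
    have "2 * \<kappa> * q * flat_laplacian l \<phi> xm \<ge> 0" using Lm kq by simp
    thus ?thesis using eqn[of xm] unfolding H_def by simp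
  qed
  have "\<not> \<phi> xm < \<phi> xM"
  proof
    assume "\<phi> xm < \<phi> xM"
    hence "H (\<phi> xm) < H (\<phi> xM)" using Hm ly(3) by blast
    thus False using HM Hm0 by simp
  qed
  hence const: "\<phi> x = \<phi> xM" for x using xM[of x] xm[of x] xm[of xM] by linarith
  define c where "c = \<phi> xM"
  have c: "c > 0" unfolding c_def using ly(3) by simp
  have "H c = 0" using HM Hm0 const[of xm] unfolding c_def by simp
  hence "\<kappa> * \<tau>0^2 * c powr (q - 1) = \<mu>^2 * \<kappa> * c powr (- q - 1)" unfolding H_def by simp
  hence "c powr q = \<bar>\<mu> / \<tau>0\<bar>" by (rule const_eq_value[OF c kp t])
  thus ?thesis using c const unfolding c_def q_def by blast
qed

lemma nosol_tau0:
  fixes l :: "'n::finite \<Rightarrow> real" and \<phi> :: "real^'n \<Rightarrow> real"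
  assumes n3: "CARD('n) \<ge> 3" and lpos: "\<forall>k. l k > 0" and m: "\<mu> \<noteq> 0"
    and LY: "LY_solution l (\<lambda>x i j. \<mu> * sigma_flat i1 l i j) 0 \<phi>"
  shows False
proof -
  define q where "q = qexp (real CARD('n))"
  define \<kappa> where "\<kappa> = kappa (real CARD('n))"
  have q2: "q > 2" and kp: "\<kappa> > 0" using nq_facts[OF n3] unfolding q_def \<kappa>_def by auto
  have S: "tnorm2 l ((\<lambda>x i j. \<mu> * sigma_flat i1 l i j) x) = \<mu>^2 * \<kappa>"
    using tnorm2_sigma[OF lpos] unfolding \<kappa>_def by simp
  note ly = LY_eq[OF LY]
  have eqn: "2 * \<kappa> * q * flat_laplacian l \<phi> x = - (\<mu>^2 * \<kappa> * \<phi> x powr (- q - 1))" for x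
    using ly(4)[of x] S unfolding q_def \<kappa>_def by simp
  have sf: "continuous_on UNIV \<phi>" using smooth_facts(1)[OF ly(1)] .
  obtain xm where xm: "\<And>x. \<phi> xm \<le> \<phi> x" using periodic_min[OF sf ly(2)] by blast
  have Lm: "flat_laplacian l \<phi> xm \<ge> 0" by (rule lap_min[OF ly(1) lpos xm])
  have "2 * \<kappa> * q * flat_laplacian l \<phi> xm \<ge> 0" using Lm kp q2 by simp
  moreover have "\<mu>^2 * \<kappa> * \<phi> xm powr (- q - 1) > 0" using m kp ly(3)[of xm] by simp
  ultimately show False using eqn[of xm] by linarith
qed

lemma nosol_mu0:
  fixes l :: "'n::finite \<Rightarrow> real" and \<phi> :: "real^'n \<Rightarrow> real"
  assumes n3: "CARD('n) \<ge> 3" and lpos: "\<forall>k. l k > 0" and t: "\<tau>0 \<noteq> 0"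
    and LY: "LY_solution l (\<lambda>x i j. 0 * sigma_flat i1 l i j) \<tau>0 \<phi>"
  shows False
proof -
  define q where "q = qexp (real CARD('n))"
  define \<kappa> where "\<kappa> = kappa (real CARD('n))"
  have q2: "q > 2" and kp: "\<kappa> > 0" using nq_facts[OF n3] unfolding q_def \<kappa>_def by auto
  have S: "tnorm2 l ((\<lambda>x i j. 0 * sigma_flat i1 l i j) x) = 0"
    unfolding tnorm2_def by simp
  note ly = LY_eq[OF LY]
  have eqn: "2 * \<kappa> * q * flat_laplacian l \<phi> x = \<kappa> * \<tau>0^2 * \<phi> x powr (q - 1)" for x
    using ly(4)[of x] S unfolding q_def \<kappa>_def by simp
  have sf: "continuous_on UNIV \<phi>" using smooth_facts(1)[OF ly(1)] .
  obtain xM where xM: "\<And>x. \<phi> x \<le> \<phi> xM" using periodic_max[OF sf ly(2)] by blast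
  have LM: "flat_laplacian l \<phi> xM \<le> 0" by (rule lap_max[OF ly(1) lpos xM])
  have "2 * \<kappa> * q * flat_laplacian l \<phi> xM \<le> 0" by (rule mult_nonneg_nonpos) (use LM kp q2 in auto)
  moreover have "\<kappa> * \<tau>0^2 * \<phi> xM powr (q - 1) > 0" using t kp ly(3)[of xM] by simp
  ultimately show False using eqn[of xM] by linarith
qed

lemma const00:
  fixes l :: "'n::finite \<Rightarrow> real" and \<phi> :: "real^'n \<Rightarrow> real"
  assumes n3: "CARD('n) \<ge> 3" and lpos: "\<forall>k. l k > 0"
    and LY: "LY_solution l (\<lambda>x i j. 0 * sigma_flat i1 l i j) 0 \<phi>"
  shows "\<phi> x = \<phi> 0"
proof -
  define q where "q = qexp (real CARD('n))"
  define \<kappa> where "\<kappa> = kappa (real CARD('n))"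
  have q2: "q > 2" and kp: "\<kappa> > 0" using nq_facts[OF n3] unfolding q_def \<kappa>_def by auto
  have S: "tnorm2 l ((\<lambda>x i j. 0 * sigma_flat i1 l i j) x) = 0"
    unfolding tnorm2_def by simp
  note ly = LY_eq[OF LY]
  have "2 * \<kappa> * q * flat_laplacian l \<phi> x = 0" for x
    using ly(4)[of x] S unfolding q_def \<kappa>_def by simp
  hence L: "flat_laplacian l \<phi> x = 0" for x using kp q2 by simp
  show ?thesis by (rule harmonic_const[OF ly(1) ly(2) lpos L])
qed



lemma abs_powr_deriv:
  fixes a b t0 :: real
  assumes "t0 \<noteq> 0"
  shows "((\<lambda>t. \<bar>t\<bar> powr a * b) has_real_derivative (sgn t0 * a * \<bar>t0\<bar> powr (a - 1) * b)) (at t0)"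
proof (cases "t0 > 0")
  case True
  have d: "((\<lambda>t. t powr a * b) has_real_derivative (a * t0 powr (a - 1) * b)) (at t0)"
    by (rule DERIV_cmult_right[OF has_real_derivative_powr[OF True]])
  have ev: "eventually (\<lambda>t. \<bar>t\<bar> powr a * b = t powr a * b) (nhds t0)"
    by (rule eventually_mono[OF eventually_nhds_in_open[of "{0<..}" t0]]) (use True in auto)
  have "((\<lambda>t. \<bar>t\<bar> powr a * b) has_real_derivative (a * t0 powr (a - 1) * b)) (at t0)"
    using DERIV_cong_ev[OF refl ev refl] d by simp
  thus ?thesis using True by simp
next
  case False
  hence neg: "t0 < 0" using assms by simp
  have g: "((\<lambda>t. - t) has_real_derivative -1) (at t0)" by (auto intro!: derivative_eq_intros)
  have d0: "((\<lambda>t. (- t) powr a) has_real_derivative a * (- t0) powr (a - of_nat 1) * -1) (at t0)"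
    by (rule DERIV_fun_powr[OF g]) (use neg in simp)
  have d: "((\<lambda>t. (- t) powr a * b) has_real_derivative (a * (- t0) powr (a - of_nat 1) * -1) * b) (at t0)"
    by (rule DERIV_cmult_right[OF d0])
  have ev: "eventually (\<lambda>t. \<bar>t\<bar> powr a * b = (- t) powr a * b) (nhds t0)"
    by (rule eventually_mono[OF eventually_nhds_in_open[of "{..<0}" t0]]) (use neg in auto)
  have "((\<lambda>t. \<bar>t\<bar> powr a * b) has_real_derivative (a * (- t0) powr (a - of_nat 1) * -1) * b) (at t0)"
    using DERIV_cong_ev[OF refl ev refl] d by simp
  thus ?thesis using neg by simp
qed

lemma diag_eq:
  fixes M :: "'n \<Rightarrow> 'n \<Rightarrow> real"
  assumes "\<And>i j. i \<noteq> j \<Longrightarrow> M i j = 0"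
  shows "M i j = (if i = j then M i i else 0)"
  using assms by auto

lemma kasner_case:
  fixes l :: "'n::finite \<Rightarrow> real" and \<phi> :: "real^'n \<Rightarrow> real" and a :: "'n \<Rightarrow> real"
  assumes n3: "CARD('n) \<ge> 3" and lpos: "\<forall>k. l k > 0" and t: "\<tau>0 \<noteq> 0"
    and c: "c > 0" and phic: "\<And>x. \<phi> x = c"
    and mueq: "\<mu> / c powr qexp (real CARD('n)) = \<epsilon> * \<tau>0"
    and ka: "kasner_exponents a"
    and a1: "a i1 = \<epsilon> * kappa (real CARD('n)) + 1 / real CARD('n)"
    and ak: "\<And>k. k \<noteq> i1 \<Longrightarrow> a k = (1 - \<epsilon>) / real CARD('n)"
  shows "\<exists>lb. kasner_cmc_slice a lb (\<tau>0 > 0) (gen_metric l \<phi>) (gen_K l (\<lambda>x i j. \<mu> * sigma_flat i1 l i j) \<tau>0 \<phi>)"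
proof -
  define n where "n = real CARD('n)"
  define q where "q = qexp n"
  define G where "G = c powr (q - 2)"
  define P where "P = c powr q"
  define t0 where "t0 = 1 / \<tau>0"
  define lb where "lb = (\<lambda>k. sqrt G * l k / \<bar>t0\<bar> powr a k)"
  define fd where "fd = (\<lambda>k. sgn t0 * a k * \<bar>t0\<bar> powr (a k - 1) * lb k)"
  have n0: "n > 0" unfolding n_def by simp
  have Gp: "G > 0" unfolding G_def using c by simp
  have Pp: "P > 0" unfolding P_def using c by simp
  have t0nz: "t0 \<noteq> 0" unfolding t0_def using t by simp
  have X: "\<bar>t0\<bar> powr b > 0" for b using t0nz by simp
  have lk: "l k > 0" for k using lpos by simp
  have lnz: "l k \<noteq> 0" for k using lk[of k] by simp
  have lbp: "lb k > 0" for k unfolding lb_def using Gp lk[of k] X[of "a k"] by simp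
  have fval: "kasner_f a lb k t0 = sqrt G * l k" for k
    unfolding kasner_f_def lb_def using X[of "a k"] by simp
  have fder: "(kasner_f a lb k has_real_derivative fd k) (at t0)" for k
  proof -
    have "kasner_f a lb k = (\<lambda>t. \<bar>t\<bar> powr a k * lb k)" unfolding kasner_f_def by auto
    thus ?thesis unfolding fd_def using abs_powr_deriv[OF t0nz] by simp
  qed
  have sa: "sgn t0 / \<bar>t0\<bar> = \<tau>0" unfolding t0_def using t
    by (cases "\<tau>0 > 0") (auto simp: sgn_if field_simps)
  have fprod: "kasner_f a lb k t0 * fd k = G * (l k)^2 * a k * \<tau>0" for k
  proof -
    have pw: "\<bar>t0\<bar> powr (a k - 1) = \<bar>t0\<bar> powr a k / \<bar>t0\<bar>" using t0nz by (simp add: powr_diff)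
    have sG: "sqrt G * sqrt G = G" using Gp by simp
    have "kasner_f a lb k t0 * fd k = (sqrt G * l k) * fd k" using fval[of k] by simp
    also have "\<dots>
        = (sqrt G * sqrt G) * (l k)^2 * a k * (sgn t0 / \<bar>t0\<bar>) * (\<bar>t0\<bar> powr a k / \<bar>t0\<bar> powr a k)"
      unfolding fd_def lb_def pw using t0nz by (simp add: field_simps power2_eq_square)
    also have "\<dots> = G * (l k)^2 * a k * \<tau>0" unfolding sG sa using X[of "a k"] by simp
    finally show ?thesis .
  qed
  have cm2: "c powr (-2) = G / P" unfolding G_def P_def using c
    by (simp add: powr_diff powr_minus_divide)
  have muP: "\<mu> * (G / P) = G * (\<epsilon> * \<tau>0)"
  proof -
    have "\<mu> * (G / P) = G * (\<mu> / P)" by (simp add: ac_simps)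
    also have "\<mu> / P = \<epsilon> * \<tau>0" using mueq unfolding P_def q_def n_def .
    finally show ?thesis .
  qed
  have tI: "t0 \<in> kasner_time (\<tau>0 > 0)" unfolding kasner_time_def t0_def using t by auto
  have gm: "gen_metric l \<phi> x i j = (if i = j then (kasner_f a lb i t0)^2 else 0)" for x i j
    unfolding gen_metric_def phic fval flat_metric_def G_def[symmetric, unfolded q_def n_def]
    using Gp by (simp add: power_mult_distrib)
  have gk: "gen_K l (\<lambda>x i j. \<mu> * sigma_flat i1 l i j) \<tau>0 \<phi> x i j
      = (if i = j then kasner_f a lb i t0 * fd i else 0)" for x i j
  proof (cases "i = j")
    case False thus ?thesis unfolding gen_K_def gen_metric_def sigma_flat_def flat_metric_def by simp
  next
    case True
    have "gen_K l (\<lambda>x i j. \<mu> * sigma_flat i1 l i j) \<tau>0 \<phi> x i i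
        = \<mu> * (G / P) * sigma_flat i1 l i i + \<tau>0 / n * (G * (l i)^2)"
      unfolding gen_K_def gen_metric_def phic cm2 flat_metric_def G_def[symmetric, unfolded q_def n_def] n_def
      by simp
    also have "\<dots> = G * (l i)^2 * a i * \<tau>0"
    proof (cases "i = i1")
      case True
      have ai: "a i = \<epsilon> * kappa n + 1 / n" using True a1 unfolding n_def by simp
      show ?thesis unfolding muP sigma_flat_def ai using True n0 unfolding n_def
        by (simp add: field_simps)
    next
      case False thus ?thesis unfolding muP sigma_flat_def ak[OF False] n_def using n0 unfolding n_def
        by (simp add: field_simps)
    qed
    finally show ?thesis using True fprod by simp
  qed
  show ?thesis
    unfolding kasner_cmc_slice_def
  proof (intro exI[of _ lb] conjI allI)
    show "kasner_exponents a" by (rule ka)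
    show "lb k > 0" for k by (rule lbp)
    show "cmc_slice (kasner_time (\<tau>0 > 0)) (kasner_f a lb) (gen_metric l \<phi>)
        (gen_K l (\<lambda>x i j. \<mu> * sigma_flat i1 l i j) \<tau>0 \<phi>)"
      by (rule slice_const[OF tI fder _ gm gk]) (use fval Gp lnz in simp)
  qed
qed



lemma const_value_eq:
  fixes c \<mu> \<tau>0 k q :: real
  assumes c: "c > 0" and t: "\<tau>0 \<noteq> 0" and cq: "c powr q = \<bar>\<mu> / \<tau>0\<bar>"
  shows "k * \<tau>0^2 * c powr (q - 1) = \<mu>^2 * k * c powr (- q - 1)"
proof -
  define P where "P = c powr q"
  have P: "P > 0" unfolding P_def using c by simp
  have A: "c powr (q - 1) = P / c" unfolding P_def using c by (simp add: powr_diff)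
  have B: "c powr (- q - 1) = 1 / (P * c)" unfolding P_def using c
    by (simp add: powr_diff powr_minus_divide)
  have e: "P * \<bar>\<tau>0\<bar> = \<bar>\<mu>\<bar>" using cq t unfolding P_def[symmetric] by (simp add: abs_divide field_simps)
  have "(P * \<bar>\<tau>0\<bar>)^2 = \<bar>\<mu>\<bar>^2" using e by simp
  hence P2: "P^2 * \<tau>0^2 = \<mu>^2" by (simp add: power_mult_distrib)
  have "k * \<tau>0^2 * (P / c) = \<mu>^2 * k * (1 / (P * c))"
    using P c P2 by (simp add: field_simps power2_eq_square)
  thus ?thesis using A B by simp
qed

lemma powr_inv_q:
  fixes x q :: real
  assumes "x > 0" "q \<noteq> 0"
  shows "(x powr (1 / q)) powr q = x"
  using assms by (simp add: powr_powr)

lemma vol: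
  fixes l :: "'n::finite \<Rightarrow> real" and \<phi> :: "real^'n \<Rightarrow> real"
  assumes n3: "CARD('n) \<ge> 3" and lpos: "\<forall>k. l k > 0" and c: "c > 0" and phic: "\<And>x. \<phi> x = c"
  shows "torus_volume (gen_metric l \<phi>) = c powr qexp (real CARD('n)) * (\<Prod>k\<in>UNIV. l k)"
proof -
  define n where "n = real CARD('n)"
  define q where "q = qexp n"
  define G where "G = c powr (q - 2)"
  have Gp: "G > 0" unfolding G_def using c by simp
  have lk: "l k > 0" for k using lpos by simp
  have det: "det (\<chi> i j. gen_metric l \<phi> x i j) = (\<Prod>i\<in>UNIV. G * (l i)^2)" for x
    by (subst det_diagonal) (simp_all add: gen_metric_def flat_metric_def phic G_def q_def n_def)
  have pr: "(\<Prod>i\<in>UNIV. G * (l i)^2) = (\<Prod>i\<in>UNIV. sqrt G * l i)^2"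
    unfolding prod_power_distrib using Gp by (simp add: power_mult_distrib)
  have sq: "sqrt ((\<Prod>i\<in>UNIV. sqrt G * l i)^2) = (\<Prod>i\<in>UNIV. sqrt G * l i)"
    using Gp lk by (simp add: prod_pos less_imp_le)
  have pd: "(\<Prod>i\<in>UNIV. sqrt G * l i) = sqrt G ^ CARD('n) * (\<Prod>i\<in>UNIV. l i)"
    by (simp add: prod.distrib)
  have sG: "sqrt G = c powr ((q - 2) / 2)" unfolding G_def using c by (simp add: powr_half_sqrt_powr)
  have pw: "sqrt G ^ CARD('n) = c powr q"
  proof -
    have "sqrt G ^ CARD('n) = (c powr ((q - 2) / 2)) powr (real CARD('n))"
      unfolding sG using c by (simp add: powr_realpow)
    also have "\<dots> = c powr ((q - 2) / 2 * n)" unfolding n_def by (simp add: powr_powr)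
    also have "(q - 2) / 2 * n = q"
    proof -
      have n3': "n \<ge> 3" unfolding n_def using n3 by simp
      show ?thesis unfolding q_def qexp_def using n3' by (simp add: field_simps)
    qed
    finally show ?thesis .
  qed
  have pl: "(\<Prod>i\<in>UNIV. l i) > 0" by (rule prod_pos) (use lk in auto)
  have cq: "c powr q > 0" using c by simp
  show ?thesis
    unfolding torus_volume_def det pr sq pd pw q_def[symmetric] n_def[symmetric]
    using pl cq by (simp add: abs_of_pos)
qed

lemma static_case:
  fixes l :: "'n::finite \<Rightarrow> real" and \<phi> :: "real^'n \<Rightarrow> real"
  assumes lpos: "\<forall>k. l k > 0" and c: "c > 0" and phic: "\<And>x. \<phi> x = c"
  shows "static_cmc_slice (\<lambda>k. sqrt (c powr (qexp (real CARD('n)) - 2)) * l k) (gen_metric l \<phi>)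
           (gen_K l (\<lambda>x i j. 0 * sigma_flat i1 l i j) 0 \<phi>)"
proof -
  define G where "G = c powr (qexp (real CARD('n)) - 2)"
  have Gp: "G > 0" unfolding G_def using c by simp
  have lk: "l k > 0" for k using lpos by simp
  have lnz: "l k \<noteq> 0" for k using lk[of k] by simp
  show ?thesis
    unfolding static_cmc_slice_def G_def[symmetric]
  proof (intro conjI allI)
    show "0 < sqrt G * l k" for k using Gp lk[of k] by simp
    show "cmc_slice UNIV (\<lambda>k t. sqrt G * l k) (gen_metric l \<phi>) (gen_K l (\<lambda>x i j. 0 * sigma_flat i1 l i j) 0 \<phi>)"
    proof (rule slice_const[where tz=0 and fd="\<lambda>k. 0"])
      show "((\<lambda>t. sqrt G * l k) has_real_derivative 0) (at 0)" for k by simp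
      show "sqrt G * l k \<noteq> 0" for k using Gp lnz[of k] by simp
      show "gen_metric l \<phi> x i j = (if i = j then (sqrt G * l i)^2 else 0)" for x i j
        unfolding gen_metric_def phic flat_metric_def G_def[symmetric] using Gp by (simp add: power_mult_distrib)
      show "gen_K l (\<lambda>x i j. 0 * sigma_flat i1 l i j) 0 \<phi> x i j = (if i = j then sqrt G * l i * 0 else 0)" for x i j
        unfolding gen_K_def by simp
    qed simp
  qed
qed

lemma flat_exps_facts:
  assumes n3: "CARD('n::finite) \<ge> 3"
  shows "kasner_exponents (flat_exps (i1::'n))"
    "flat_exps i1 i1 = 1 * kappa (real CARD('n)) + 1 / real CARD('n)"
    "\<And>k. k \<noteq> i1 \<Longrightarrow> flat_exps i1 k = (1 - 1) / real CARD('n)"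
proof -
  have sq: "(\<Sum>k\<in>UNIV. (flat_exps i1 k)^2) = (\<Sum>k\<in>(UNIV::'n set). if k = i1 then 1 else 0)"
    by (rule sum.cong) (auto simp: flat_exps_def)
  show "kasner_exponents (flat_exps (i1::'n))"
    unfolding kasner_exponents_def sq by (simp add: flat_exps_def)
  have "real CARD('n) > 0" by simp
  thus "flat_exps i1 i1 = 1 * kappa (real CARD('n)) + 1 / real CARD('n)"
    unfolding flat_exps_def kappa_def by (simp add: field_simps)
  show "\<And>k. k \<noteq> i1 \<Longrightarrow> flat_exps i1 k = (1 - 1) / real CARD('n)"
    unfolding flat_exps_def by simp
qed

lemma dual_exps_facts:
  assumes n3: "CARD('n::finite) \<ge> 3"
  shows "kasner_exponents (dual_exps (i1::'n))"
    "dual_exps i1 i1 = (-1) * kappa (real CARD('n)) + 1 / real CARD('n)"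
    "\<And>k. k \<noteq> i1 \<Longrightarrow> dual_exps i1 k = (1 - (-1)) / real CARD('n)"
proof -
  define n where "n = real CARD('n)"
  have n3': "n \<ge> 3" unfolding n_def using n3 by simp
  have tq: "2 / qexp n = (n - 2) / n" unfolding qexp_def using n3' by (simp add: field_simps)
  have s1: "(\<Sum>k\<in>UNIV. dual_exps i1 k) = 1"
    unfolding dual_exps_def sum_if_single n_def[symmetric] qexp_def using n3' by (simp add: field_simps)
  have sq: "(\<Sum>k\<in>UNIV. (dual_exps i1 k)^2) = (\<Sum>k\<in>(UNIV::'n set). if k = i1 then (2 / qexp n)^2 else (2 / n)^2)"
    by (rule sum.cong) (auto simp: dual_exps_def n_def)
  have s2: "(\<Sum>k\<in>UNIV. (dual_exps i1 k)^2) = 1"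
    unfolding sq sum_if_single n_def[symmetric] qexp_def using n3' by (simp add: field_simps power2_eq_square)
  show "kasner_exponents (dual_exps (i1::'n))" unfolding kasner_exponents_def using s1 s2 by simp
  show "dual_exps i1 i1 = (-1) * kappa (real CARD('n)) + 1 / real CARD('n)"
    unfolding dual_exps_def kappa_def n_def[symmetric] qexp_def using n3' by (simp add: field_simps)
  show "\<And>k. k \<noteq> i1 \<Longrightarrow> dual_exps i1 k = (1 - (-1)) / real CARD('n)"
    unfolding dual_exps_def by simp
qed



theorem proposition4p3:
  fixes l :: "'n::finite \<Rightarrow> real" and i1 :: 'n and \<mu> \<tau>0 :: real
  assumes n3: "CARD('n) \<ge> 3"
    and lpos: "\<forall>k. l k > 0"
  defines "\<sigma> \<equiv> (\<lambda>(x::real^'n) i j. \<mu> * sigma_flat i1 l i j)"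
  shows
   "(\<tau>0 \<noteq> 0 \<and> \<mu> \<noteq> 0 \<and> sgn \<tau>0 = sgn \<mu> \<longrightarrow>
       (\<exists>\<phi>. LY_solution l \<sigma> \<tau>0 \<phi>) \<and>
       (\<forall>\<phi>. LY_solution l \<sigma> \<tau>0 \<phi> \<longrightarrow>
          (\<exists>lb. kasner_cmc_slice (flat_exps i1) lb (\<tau>0 > 0)
                   (gen_metric l \<phi>) (gen_K l \<sigma> \<tau>0 \<phi>)) \<and>
          torus_volume (gen_metric l \<phi>) = \<bar>\<mu> / \<tau>0\<bar> * (\<Prod>k\<in>UNIV. l k)))
    \<and> (\<tau>0 \<noteq> 0 \<and> \<mu> \<noteq> 0 \<and> sgn \<tau>0 = - sgn \<mu> \<longrightarrow>
       (\<exists>\<phi>. LY_solution l \<sigma> \<tau>0 \<phi>) \<and>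
       (\<forall>\<phi>. LY_solution l \<sigma> \<tau>0 \<phi> \<longrightarrow>
          (\<exists>lb. kasner_cmc_slice (dual_exps i1) lb (\<tau>0 > 0)
                   (gen_metric l \<phi>) (gen_K l \<sigma> \<tau>0 \<phi>)) \<and>
          torus_volume (gen_metric l \<phi>) = \<bar>\<mu> / \<tau>0\<bar> * (\<Prod>k\<in>UNIV. l k)))
    \<and> (\<tau>0 = 0 \<and> \<mu> = 0 \<longrightarrow>
       (\<forall>c>0. \<exists>\<phi>. LY_solution l \<sigma> \<tau>0 \<phi> \<and>
                 (\<forall>x i j. gen_metric l \<phi> x i j = c * flat_metric l i j)) \<and>
       (\<forall>\<phi>. LY_solution l \<sigma> \<tau>0 \<phi> \<longrightarrow>
          (\<exists>c>0. \<forall>x i j. gen_metric l \<phi> x i j = c * flat_metric l i j) \<and>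
          (\<exists>l'. static_cmc_slice l' (gen_metric l \<phi>) (gen_K l \<sigma> \<tau>0 \<phi>))))
    \<and> ((\<tau>0 = 0) \<noteq> (\<mu> = 0) \<longrightarrow> \<not> (\<exists>\<phi>. LY_solution l \<sigma> \<tau>0 \<phi>))"
proof -
  define q where "q = qexp (real CARD('n))"
  define \<kappa> where "\<kappa> = kappa (real CARD('n))"
  have q2: "q > 2" and kp: "\<kappa> > 0" using nq_facts[OF n3] unfolding q_def \<kappa>_def by auto
  have Sv: "tnorm2 l (\<lambda>i j. \<mu> * sigma_flat i1 l i j) = \<mu>^2 * \<kappa>"
    using tnorm2_sigma[OF lpos] unfolding \<kappa>_def by simp
  have exist: "\<exists>\<phi>. LY_solution l \<sigma> \<tau>0 \<phi>" if t: "\<tau>0 \<noteq> 0" and m: "\<mu> \<noteq> 0"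
  proof -
    define c where "c = \<bar>\<mu> / \<tau>0\<bar> powr (1 / q)"
    have cp: "c > 0" unfolding c_def using m t by simp
    have cq: "c powr q = \<bar>\<mu> / \<tau>0\<bar>" unfolding c_def using m t q2 by (simp add: powr_powr)
    have "\<kappa> * \<tau>0^2 * c powr (q - 1) = \<mu>^2 * \<kappa> * c powr (- q - 1)"
      by (rule const_value_eq[OF cp t cq])
    hence "LY_solution l (\<lambda>x. (\<lambda>i j. \<mu> * sigma_flat i1 l i j)) \<tau>0 (\<lambda>x::real^'n. c)"
      by (intro const_sol[OF cp]) (simp add: Sv q_def \<kappa>_def)
    thus ?thesis unfolding \<sigma>_def by blast
  qed
  have C1: "\<tau>0 \<noteq> 0 \<and> \<mu> \<noteq> 0 \<and> sgn \<tau>0 = sgn \<mu> \<longrightarrow>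
       (\<exists>\<phi>. LY_solution l \<sigma> \<tau>0 \<phi>) \<and>
       (\<forall>\<phi>. LY_solution l \<sigma> \<tau>0 \<phi> \<longrightarrow>
          (\<exists>lb. kasner_cmc_slice (flat_exps i1) lb (\<tau>0 > 0)
                   (gen_metric l \<phi>) (gen_K l \<sigma> \<tau>0 \<phi>)) \<and>
          torus_volume (gen_metric l \<phi>) = \<bar>\<mu> / \<tau>0\<bar> * (\<Prod>k\<in>UNIV. l k))"
  proof (intro impI conjI allI)
    assume h: "\<tau>0 \<noteq> 0 \<and> \<mu> \<noteq> 0 \<and> sgn \<tau>0 = sgn \<mu>"
    hence t: "\<tau>0 \<noteq> 0" and m: "\<mu> \<noteq> 0" by auto
    have pos: "\<mu> / \<tau>0 > 0" using h by (cases "\<tau>0 > 0"; cases "\<mu> > 0") (auto simp: sgn_if zero_less_divide_iff divide_less_0_iff split: if_splits)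
    show "\<exists>\<phi>. LY_solution l \<sigma> \<tau>0 \<phi>" by (rule exist[OF t m])
    fix \<phi> assume LY: "LY_solution l \<sigma> \<tau>0 \<phi>"
    obtain c where c: "c > 0" "\<And>x. \<phi> x = c" "c powr qexp (real CARD('n)) = \<bar>\<mu> / \<tau>0\<bar>"
      using const12[OF n3 lpos t m LY[unfolded \<sigma>_def]] by blast
    have mueq: "\<mu> / c powr qexp (real CARD('n)) = 1 * \<tau>0"
    proof -
      have ab: "\<bar>\<mu> / \<tau>0\<bar> = \<mu> / \<tau>0" using pos by (rule abs_of_pos)
      show ?thesis unfolding c(3) ab using m t by simp
    qed
    show "\<exists>lb. kasner_cmc_slice (flat_exps i1) lb (\<tau>0 > 0) (gen_metric l \<phi>) (gen_K l \<sigma> \<tau>0 \<phi>)"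
      unfolding \<sigma>_def
      by (rule kasner_case[OF n3 lpos t c(1) c(2) mueq flat_exps_facts(1)[OF n3]
            flat_exps_facts(2)[OF n3] flat_exps_facts(3)[OF n3]])
    show "torus_volume (gen_metric l \<phi>) = \<bar>\<mu> / \<tau>0\<bar> * (\<Prod>k\<in>UNIV. l k)"
      using vol[OF n3 lpos c(1) c(2)] c(3) by simp
  qed
  have C2: "\<tau>0 \<noteq> 0 \<and> \<mu> \<noteq> 0 \<and> sgn \<tau>0 = - sgn \<mu> \<longrightarrow>
       (\<exists>\<phi>. LY_solution l \<sigma> \<tau>0 \<phi>) \<and>
       (\<forall>\<phi>. LY_solution l \<sigma> \<tau>0 \<phi> \<longrightarrow>
          (\<exists>lb. kasner_cmc_slice (dual_exps i1) lb (\<tau>0 > 0)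
                   (gen_metric l \<phi>) (gen_K l \<sigma> \<tau>0 \<phi>)) \<and>
          torus_volume (gen_metric l \<phi>) = \<bar>\<mu> / \<tau>0\<bar> * (\<Prod>k\<in>UNIV. l k))"
  proof (intro impI conjI allI)
    assume h: "\<tau>0 \<noteq> 0 \<and> \<mu> \<noteq> 0 \<and> sgn \<tau>0 = - sgn \<mu>"
    hence t: "\<tau>0 \<noteq> 0" and m: "\<mu> \<noteq> 0" by auto
    have neg: "\<mu> / \<tau>0 < 0" using h by (cases "\<tau>0 > 0"; cases "\<mu> > 0") (auto simp: sgn_if zero_less_divide_iff divide_less_0_iff split: if_splits)
    show "\<exists>\<phi>. LY_solution l \<sigma> \<tau>0 \<phi>" by (rule exist[OF t m])
    fix \<phi> assume LY: "LY_solution l \<sigma> \<tau>0 \<phi>"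
    obtain c where c: "c > 0" "\<And>x. \<phi> x = c" "c powr qexp (real CARD('n)) = \<bar>\<mu> / \<tau>0\<bar>"
      using const12[OF n3 lpos t m LY[unfolded \<sigma>_def]] by blast
    have mueq: "\<mu> / c powr qexp (real CARD('n)) = (-1) * \<tau>0"
    proof -
      have ab: "\<bar>\<mu> / \<tau>0\<bar> = - (\<mu> / \<tau>0)" using neg by (rule abs_of_neg)
      show ?thesis unfolding c(3) ab using m t by simp
    qed
    show "\<exists>lb. kasner_cmc_slice (dual_exps i1) lb (\<tau>0 > 0) (gen_metric l \<phi>) (gen_K l \<sigma> \<tau>0 \<phi>)"
      unfolding \<sigma>_def
      by (rule kasner_case[OF n3 lpos t c(1) c(2) mueq dual_exps_facts(1)[OF n3]
            dual_exps_facts(2)[OF n3] dual_exps_facts(3)[OF n3]])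
    show "torus_volume (gen_metric l \<phi>) = \<bar>\<mu> / \<tau>0\<bar> * (\<Prod>k\<in>UNIV. l k)"
      using vol[OF n3 lpos c(1) c(2)] c(3) by simp
  qed
  have C3: "\<tau>0 = 0 \<and> \<mu> = 0 \<longrightarrow>
       (\<forall>c>0. \<exists>\<phi>. LY_solution l \<sigma> \<tau>0 \<phi> \<and>
                 (\<forall>x i j. gen_metric l \<phi> x i j = c * flat_metric l i j)) \<and>
       (\<forall>\<phi>. LY_solution l \<sigma> \<tau>0 \<phi> \<longrightarrow>
          (\<exists>c>0. \<forall>x i j. gen_metric l \<phi> x i j = c * flat_metric l i j) \<and>
          (\<exists>l'. static_cmc_slice l' (gen_metric l \<phi>) (gen_K l \<sigma> \<tau>0 \<phi>)))"
  proof (intro impI conjI allI)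
    assume h: "\<tau>0 = 0 \<and> \<mu> = 0"
    hence s0: "\<sigma> = (\<lambda>x i j. 0 * sigma_flat i1 l i j)" and t0: "\<tau>0 = 0" unfolding \<sigma>_def by auto
    have T0: "tnorm2 l (\<lambda>i j. 0 * sigma_flat i1 l i j) = 0" unfolding tnorm2_def by simp
    show "\<exists>\<phi>. LY_solution l \<sigma> \<tau>0 \<phi> \<and> (\<forall>x i j. gen_metric l \<phi> x i j = c * flat_metric l i j)"
      if cp: "c > 0" for c
    proof -
      define c0 where "c0 = c powr (1 / (q - 2))"
      have c0p: "c0 > 0" unfolding c0_def using cp by simp
      have LYc: "LY_solution l (\<lambda>x. (\<lambda>i j. 0 * sigma_flat i1 l i j)) 0 (\<lambda>x::real^'n. c0)"
        by (rule const_sol[OF c0p]) (simp add: tnorm2_def)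
      have "c0 powr (q - 2) = c" unfolding c0_def using cp q2 by (simp add: powr_powr)
      hence "gen_metric l (\<lambda>x::real^'n. c0) x i j = c * flat_metric l i j" for x i j
        unfolding gen_metric_def q_def by simp
      thus ?thesis using LYc unfolding s0 t0 by blast
    qed
    fix \<phi> assume LY: "LY_solution l \<sigma> \<tau>0 \<phi>"
    have LY0: "LY_solution l (\<lambda>x i j. 0 * sigma_flat i1 l i j) 0 \<phi>" using LY unfolding s0 t0 .
    have cst: "\<phi> x = \<phi> 0" for x by (rule const00[OF n3 lpos LY0])
    have c0: "\<phi> 0 > 0" using LY_eq(3)[OF LY0] .
    show "\<exists>c>0. \<forall>x i j. gen_metric l \<phi> x i j = c * flat_metric l i j"
    proof (intro exI[of _ "\<phi> 0 powr (q - 2)"] conjI allI)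
      show "\<phi> 0 powr (q - 2) > 0" using c0 by simp
      fix x i j
      have "\<phi> x powr (q - 2) = \<phi> 0 powr (q - 2)" using cst[of x] by simp
      thus "gen_metric l \<phi> x i j = \<phi> 0 powr (q - 2) * flat_metric l i j"
        unfolding gen_metric_def q_def by simp
    qed
    show "\<exists>l'. static_cmc_slice l' (gen_metric l \<phi>) (gen_K l \<sigma> \<tau>0 \<phi>)"
      unfolding s0 t0 using static_case[where \<phi>=\<phi> and c="\<phi> 0", OF lpos c0 cst] by blast
  qed
  have C4: "(\<tau>0 = 0) \<noteq> (\<mu> = 0) \<longrightarrow> \<not> (\<exists>\<phi>. LY_solution l \<sigma> \<tau>0 \<phi>)"
  proof (intro impI notI)
    assume h: "(\<tau>0 = 0) \<noteq> (\<mu> = 0)"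
    assume "\<exists>\<phi>. LY_solution l \<sigma> \<tau>0 \<phi>"
    then obtain \<phi> where LY: "LY_solution l \<sigma> \<tau>0 \<phi>" by blast
    show False
    proof (cases "\<tau>0 = 0")
      case True
      hence m: "\<mu> \<noteq> 0" using h by simp
      show False by (rule nosol_tau0[OF n3 lpos m LY[unfolded \<sigma>_def True]])
    next
      case False
      hence m: "\<mu> = 0" using h by simp
      have "\<sigma> = (\<lambda>x i j. 0 * sigma_flat i1 l i j)" unfolding \<sigma>_def m by simp
      hence LY0: "LY_solution l (\<lambda>x i j. 0 * sigma_flat i1 l i j) \<tau>0 \<phi>" using LY by simp
      show False by (rule nosol_mu0[OF n3 lpos False LY0])
    qed
  qed
  show ?thesis using C1 C2 C3 C4 by (intro conjI)
qed


end
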